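(* Let $n\ge 1$, let $e,f$ be scalars, and let $A,B,C,D,M$ be $n\times n$ matrices. Then $d_{C,D}(M)-d_{A,B}(M)\le 1$ in each of the following cases: (1) $A=C$, $B=Z_e$, $D=Z_f$; (2) $A=C$, $B=Z_e^T$, $D=Z_f^T$; (3) $B=D$, $A=Z_e$, $C=Z_f$; (4) $B=D$, $A=Z_e^T$, $C=Z_f^T$.
   Context: For a scalar $f$, $Z_f$ denotes the $n\times n$ matrix of $f$-circular shift: $Z_f=\begin{pmatrix}\mathbf 0^T & f\\ I_{n-1} & \mathbf 0\end{pmatrix}$ (ones on the first subdiagonal, $f$ in the upper right corner, zeros elsewhere). For matrices $A,B,M$ of compatible sizes, the (Sylvester) displacement rank of $M$ with respect to the operator pair $(A,B)$ is $d_{A,B}(M)=\operatorname{rank}(AM-MB)$. *)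

theory Defs
  imports "Jordan_Normal_Form.DL_Rank"
begin

definition shift_mat :: "nat \<Rightarrow> 'a::field \<Rightarrow> 'a mat" where
  "shift_mat n f = mat n n (\<lambda>(i, j). if i = Suc j then 1
                                      else if i = 0 \<and> j = n - 1 then f else 0)"

definition disp_rank :: "nat \<Rightarrow> 'a::field mat \<Rightarrow> 'a mat \<Rightarrow> 'a mat \<Rightarrow> nat" where
  "disp_rank n A B M = vec_space.rank n (A * M - M * B)"

end

theory Submission
  imports Defs
begin

lemma rank_step:
  fixes X Y :: "'a::field mat"
  assumes X: "X \<in> carrier_mat n n" and Y: "Y \<in> carrier_mat n n"
    and prod: "\<And>r c. r < n \<Longrightarrow> c < n \<Longrightarrow> (Y - X) $$ (r,c) = p r * q c"
  shows "int (vec_space.rank n Y) - int (vec_space.rank n X) \<le> 1"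
proof -
  have D: "Y - X \<in> carrier_mat n n" using X Y by auto
  have eq: "X + (Y - X) = Y" using X Y by (intro eq_matI) auto
  have "vec_space.rank n (Y - X) \<le> 1"
    proof (rule vec_space.rank_le_1_product_entries[OF D, of p q])
    fix r c assume "r < dim_row (Y - X)" "c < dim_col (Y - X)"
    then show "(Y - X) $$ (r, c) = p r * q c" using D by (intro prod) auto
  qed
  moreover have "vec_space.rank n (X + (Y - X)) \<le> vec_space.rank n X + vec_space.rank n (Y - X)"
    by (rule vec_space.rank_subadditive[OF X D])
  ultimately show ?thesis using eq by simp
qed

lemma shift_diff:
  assumes "k < n" "c < n"
  shows "(shift_mat n f - shift_mat n e) $$ (k, c) = (if k = 0 \<and> c = n - 1 then f - e else 0)"
  using assms unfolding shift_mat_def by auto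

lemma shiftT_diff:
  assumes "k < n" "c < n"
  shows "(transpose_mat (shift_mat n f) - transpose_mat (shift_mat n e)) $$ (k, c)
       = (if c = 0 \<and> k = n - 1 then f - e else 0)"
  using assms unfolding shift_mat_def by auto

lemma right_entry:
  fixes M Z :: "'a::field mat"
  assumes M: "M \<in> carrier_mat n n" and Z: "Z \<in> carrier_mat n n" and r: "r < n" and c: "c < n"
    and k0: "k0 < n"
    and z: "\<And>k. k < n \<Longrightarrow> Z $$ (k, c) = (if k = k0 then z else 0)"
  shows "(M * Z) $$ (r, c) = M $$ (r, k0) * z"
proof -
  have "(M * Z) $$ (r, c) = (\<Sum>k<n. M $$ (r, k) * Z $$ (k, c))"
    using M Z r c by (simp add: scalar_prod_def lessThan_atLeast0)
  also have "\<dots> = (\<Sum>k<n. if k = k0 then M $$ (r, k0) * z else 0)"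
    by (rule sum.cong) (auto simp: z)
  also have "\<dots> = M $$ (r, k0) * z" using k0 by simp
  finally show ?thesis .
qed

lemma left_entry:
  fixes M Z :: "'a::field mat"
  assumes M: "M \<in> carrier_mat n n" and Z: "Z \<in> carrier_mat n n" and r: "r < n" and c: "c < n"
    and k0: "k0 < n"
    and z: "\<And>k. k < n \<Longrightarrow> Z $$ (r, k) = (if k = k0 then z else 0)"
  shows "(Z * M) $$ (r, c) = z * M $$ (k0, c)"
proof -
  have "(Z * M) $$ (r, c) = (\<Sum>k<n. Z $$ (r, k) * M $$ (k, c))"
    using M Z r c by (simp add: scalar_prod_def lessThan_atLeast0)
  also have "\<dots> = (\<Sum>k<n. if k = k0 then z * M $$ (k0, c) else 0)"
    by (rule sum.cong) (auto simp: z)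
  also have "\<dots> = z * M $$ (k0, c)" using k0 by simp
  finally show ?thesis .
qed

theorem theorem3p2:
  fixes e f :: "'a::field" and A B C D M :: "'a mat" and n :: nat
  assumes "n \<ge> 1"
    and "A \<in> carrier_mat n n" and "B \<in> carrier_mat n n" and "C \<in> carrier_mat n n"
    and "D \<in> carrier_mat n n" and "M \<in> carrier_mat n n"
  shows "(A = C \<and> B = shift_mat n e \<and> D = shift_mat n f
            \<longrightarrow> int (disp_rank n C D M) - int (disp_rank n A B M) \<le> 1)
       \<and> (A = C \<and> B = transpose_mat (shift_mat n e) \<and> D = transpose_mat (shift_mat n f)
            \<longrightarrow> int (disp_rank n C D M) - int (disp_rank n A B M) \<le> 1)
       \<and> (B = D \<and> A = shift_mat n e \<and> C = shift_mat n f
            \<longrightarrow> int (disp_rank n C D M) - int (disp_rank n A B M) \<le> 1)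
       \<and> (B = D \<and> A = transpose_mat (shift_mat n e) \<and> C = transpose_mat (shift_mat n f)
            \<longrightarrow> int (disp_rank n C D M) - int (disp_rank n A B M) \<le> 1)"
proof -
  note cA = assms(2) and cB = assms(3) and cC = assms(4) and cD = assms(5) and cM = assms(6)
  have n1: "n - 1 < n" "0 < n" using assms(1) by auto
  have CD: "C * M - M * D \<in> carrier_mat n n" using cC cD cM by auto
  have AB: "A * M - M * B \<in> carrier_mat n n" using cA cB cM by auto
  have right: "(C * M - M * D) - (A * M - M * B) = M * (B - D)" if "A = C"
    using that cA cB cD cM
    by (intro eq_matI) (auto simp: mult_minus_distrib_mat[OF cM cB cD] algebra_simps)
  have left: "(C * M - M * D) - (A * M - M * B) = (C - A) * M" if "B = D"
    using that cA cC cD cM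
    by (intro eq_matI) (auto simp: minus_mult_distrib_mat[OF cC cA cM] algebra_simps)
  show ?thesis
  proof (intro conjI impI)
    assume h: "A = C \<and> B = shift_mat n e \<and> D = shift_mat n f"
    have Z: "B - D \<in> carrier_mat n n" using cB cD by auto
    show "int (disp_rank n C D M) - int (disp_rank n A B M) \<le> 1"
      unfolding disp_rank_def
    proof (rule rank_step[OF AB CD, of "\<lambda>r. M $$ (r, 0)" "\<lambda>c. if c = n - 1 then e - f else 0"])
      fix r c assume rc: "r < n" "c < n"
      have "(B - D) $$ (k, c) = (if k = 0 then (if c = n - 1 then e - f else 0) else 0)" if "k < n" for k
        using shift_diff[OF that rc(2), of e f] h that rc by auto
      then show "(C * M - M * D - (A * M - M * B)) $$ (r, c) = M $$ (r, 0) * (if c = n - 1 then e - f else 0)"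
        unfolding right[OF conjunct1[OF h]] by (rule right_entry[OF cM Z rc n1(2)])
    qed
  next
    assume h: "A = C \<and> B = transpose_mat (shift_mat n e) \<and> D = transpose_mat (shift_mat n f)"
    have Z: "B - D \<in> carrier_mat n n" using cB cD by auto
    show "int (disp_rank n C D M) - int (disp_rank n A B M) \<le> 1"
      unfolding disp_rank_def
    proof (rule rank_step[OF AB CD, of "\<lambda>r. M $$ (r, n - 1)" "\<lambda>c. if c = 0 then e - f else 0"])
      fix r c assume rc: "r < n" "c < n"
      have "(B - D) $$ (k, c) = (if k = n - 1 then (if c = 0 then e - f else 0) else 0)" if "k < n" for k
        using shiftT_diff[OF that rc(2), of e f] h that rc by auto
      then show "(C * M - M * D - (A * M - M * B)) $$ (r, c) = M $$ (r, n - 1) * (if c = 0 then e - f else 0)"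
        unfolding right[OF conjunct1[OF h]] by (rule right_entry[OF cM Z rc n1(1)])
    qed
  next
    assume h: "B = D \<and> A = shift_mat n e \<and> C = shift_mat n f"
    have Z: "C - A \<in> carrier_mat n n" using cC cA by auto
    show "int (disp_rank n C D M) - int (disp_rank n A B M) \<le> 1"
      unfolding disp_rank_def
    proof (rule rank_step[OF AB CD, of "\<lambda>r. if r = 0 then f - e else 0" "\<lambda>c. M $$ (n - 1, c)"])
      fix r c assume rc: "r < n" "c < n"
      have "(C - A) $$ (r, k) = (if k = n - 1 then (if r = 0 then f - e else 0) else 0)" if "k < n" for k
        using shift_diff[OF rc(1) that, of f e] h that rc by auto
      then show "(C * M - M * D - (A * M - M * B)) $$ (r, c) = (if r = 0 then f - e else 0) * M $$ (n - 1, c)"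
        unfolding left[OF conjunct1[OF h]] by (rule left_entry[OF cM Z rc n1(1)])
    qed
  next
    assume h: "B = D \<and> A = transpose_mat (shift_mat n e) \<and> C = transpose_mat (shift_mat n f)"
    have Z: "C - A \<in> carrier_mat n n" using cC cA by auto
    show "int (disp_rank n C D M) - int (disp_rank n A B M) \<le> 1"
      unfolding disp_rank_def
    proof (rule rank_step[OF AB CD, of "\<lambda>r. if r = n - 1 then f - e else 0" "\<lambda>c. M $$ (0, c)"])
      fix r c assume rc: "r < n" "c < n"
      have "(C - A) $$ (r, k) = (if k = 0 then (if r = n - 1 then f - e else 0) else 0)" if "k < n" for k
        using shiftT_diff[OF rc(1) that, of f e] h that rc by auto
      then show "(C * M - M * D - (A * M - M * B)) $$ (r, c) = (if r = n - 1 then f - e else 0) * M $$ (0, c)"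
        unfolding left[OF conjunct1[OF h]] by (rule left_entry[OF cM Z rc n1(2)])
    qed
  qed
qed

end
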